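(* If $M$ is an irreducible finite-dimensional graded ${}^\theta\mathbf R_m$-module, then for every sequence $\mathbf i$ one has ${\rm gdim}(1_{\mathbf i}M)\in v\,\mathbb Z[v^2,v^{-2}]\cup\mathbb Z[v^2,v^{-2}]$.
   Context: Let $\mathbf k$ be an algebraically closed field of characteristic $0$. Fix $p,q\in\mathbf k^\times$ with $p\ne\pm1$, and $I\subset\mathbf k^\times$ with $1,-1\notin I$, stable under $z\mapsto p^{\pm2}z$ and $z\mapsto z^{-1}$. Let $h_{i,j}=1$ if $i=p^2j$ and $0$ otherwise, $i\cdot j=-h_{i,j}-h_{j,i}$ ($i\ne j$), $i\cdot i=2$, $\theta(i)=i^{-1}$, $\lambda_i=1$ if $i\in\{q,-q\}$ and $0$ otherwise, $Q_{i,j}(u,v)=(-1)^{h_{i,j}}(u-v)^{-i\cdot j}$ ($i\ne j$), $Q_{i,i}=0$. For $\nu\in\mathbb NI$ with $\nu_{\theta(i)}=\nu_i$, $\sum\nu_i=2m$, ${}^\theta I^\nu$ is the set of $\mathbf i=(i_{1-m},\dots,i_m)\in I^{2m}$ with $i_{1-l}=\theta(i_l)$ and $\#\{l:i_l=i\}=\nu_i$. $W_m=\mathfrak S_m\ltimes(\mathbb Z/2)^m$ acts on $\{1-m,\dots,m\}$ by permutations commuting with $l\mapsto1-l$ ($\varepsilon_l$ exchanges $l,1-l$; $s_k$ the transposition of $k,k+1$) and on sequences by $(w\mathbf i)_l=i_{w^{-1}(l)}$. The graded algebra ${}^\theta\mathbf R_{\lambda,\nu}$ ($m\ge1$) is generated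 by $1_{\mathbf i}$, $\varkappa_l$ ($1\le l\le m$), $\sigma_k$ ($1\le k\le m-1$), $\pi_1$, with $1=\sum1_{\mathbf i}$, $\varkappa_{1-l}:=-\varkappa_l$, and relations: $1_{\mathbf i}1_{\mathbf i'}=\delta_{\mathbf i,\mathbf i'}1_{\mathbf i}$, $\sigma_k1_{\mathbf i}=1_{s_k\mathbf i}\sigma_k$, $\varkappa_l1_{\mathbf i}=1_{\mathbf i}\varkappa_l$, $\pi_11_{\mathbf i}=1_{\varepsilon_1\mathbf i}\pi_1$; $\varkappa$'s commute, $\pi_1\varkappa_l=\varkappa_{\varepsilon_1(l)}\pi_1$; $\sigma_k^21_{\mathbf i}=Q_{i_k,i_{k+1}}(\varkappa_{k+1},\varkappa_k)1_{\mathbf i}$, $\pi_1^21_{\mathbf i}=\varkappa_0^{\lambda_{i_0}}\varkappa_1^{\lambda_{i_1}}1_{\mathbf i}$; $\sigma_k\sigma_{k'}=\sigma_{k'}\sigma_k$ ($|k-k'|\ne1$), $\pi_1\sigma_k=\sigma_k\pi_1$ ($k\ne1$); $(\sigma_1\pi_1)^21_{\mathbf i}=(\pi_1\sigma_1)^21_{\mathbf i}+\delta_{i_0,i_2}(-1)^{\lambda_{i_2}}\frac{\varkappa_0^{\lambda_{i_1}+\lambda_{i_2}}-\varkappa_2^{\lambda_{i_1}+\lambda_{i_2}}}{\varkappa_0-\varkappa_2}\sigma_11_{\mathbf i}$; $(\sigma_{k+1}\sigma_k\sigma_{k+1}-\sigma_k\sigma_{k+1}\sigma_k)1_{\mathbf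 i}=\delta_{i_k,i_{k+2}}\frac{Q_{i_k,i_{k+1}}(\varkappa_{k+1},\varkappa_k)-Q_{i_k,i_{k+1}}(\varkappa_{k+1},\varkappa_{k+2})}{\varkappa_k-\varkappa_{k+2}}1_{\mathbf i}$; $(\sigma_k\varkappa_l-\varkappa_{s_k(l)}\sigma_k)1_{\mathbf i}$ is $-1_{\mathbf i}$ if $l=k$, $i_k=i_{k+1}$, is $1_{\mathbf i}$ if $l=k+1$, $i_k=i_{k+1}$, and $0$ otherwise. Grading: $\deg1_{\mathbf i}=0$, $\deg\varkappa_l=2$, $\deg(\pi_11_{\mathbf i})=\lambda_{i_0}+\lambda_{i_1}$, $\deg(\sigma_k1_{\mathbf i})=-i_k\cdot i_{k+1}$. ${}^\theta\mathbf R_m=\bigoplus_{\nu:\sum\nu_i=2m}{}^\theta\mathbf R_{\lambda,\nu}$, ${}^\theta\mathbf R_0=\mathbf k$. For a graded vector space $N$, ${\rm gdim}\,N=\sum_dv^d\dim N_d$. *)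

theory Defs
  imports "HOL-Computational_Algebra.Polynomial"
begin

definition hh :: "'k::field \<Rightarrow> 'k \<Rightarrow> 'k \<Rightarrow> nat" where
  "hh p i j = (if i = p^2 * j then 1 else 0)"

definition cdot :: "'k::field \<Rightarrow> 'k \<Rightarrow> 'k \<Rightarrow> int" where
  "cdot p i j = (if i = j then 2 else - int (hh p i j) - int (hh p j i))"

definition lam :: "'k::field \<Rightarrow> 'k \<Rightarrow> nat" where
  "lam q i = (if i = q \<or> i = - q then 1 else 0)"

text \<open>A sequence (i_{1-m},...,i_m) with i_{1-l} = theta(i_l) = i_l^{-1} is
  determined by the list [i_1,...,i_m]; the entry i_l (for 1-m \<le> l \<le> m) is:\<close>
definition ix :: "'k::field list \<Rightarrow> int \<Rightarrow> 'k" where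
  "ix i l = (if l \<ge> 1 then i ! (nat l - 1) else inverse (i ! nat (- l)))"

text \<open>The set of all sequences in the union over nu of theta-I^nu (sum nu_i = 2m).\<close>
definition seqs :: "'k set \<Rightarrow> nat \<Rightarrow> 'k list set" where
  "seqs I m = {i. length i = m \<and> set i \<subseteq> I}"

definition sk_seq :: "nat \<Rightarrow> 'k list \<Rightarrow> 'k list" where
  "sk_seq k i = i[k - 1 := i ! k, k := i ! (k - 1)]"

definition eps1_seq :: "'k::field list \<Rightarrow> 'k list" where
  "eps1_seq i = i[0 := inverse (i ! 0)]"

definition sk_pos :: "nat \<Rightarrow> nat \<Rightarrow> nat" where
  "sk_pos k l = (if l = k then k + 1 else if l = k + 1 then k else l)"

definition eps1_pos :: "int \<Rightarrow> int" where
  "eps1_pos l = (if l = 1 then 0 else if l = 0 then 1 else l)"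

text \<open>kappa_l as an operator for every l in {1-m..m}, using kappa_{1-l} = - kappa_l.\<close>
definition Xop :: "(nat \<Rightarrow> 'v \<Rightarrow> 'v::ab_group_add) \<Rightarrow> int \<Rightarrow> 'v \<Rightarrow> 'v" where
  "Xop x l = (if l \<ge> 1 then x (nat l) else (\<lambda>v. - x (nat (1 - l)) v))"

definition opminus :: "('v \<Rightarrow> 'v::ab_group_add) \<Rightarrow> ('v \<Rightarrow> 'v) \<Rightarrow> 'v \<Rightarrow> 'v" where
  "opminus A B = (\<lambda>v. A v - B v)"

text \<open>The divided difference (A^n - B^n)/(A - B) = sum_{j<n} A^j B^{n-1-j}
  for commuting operators A, B.\<close>
definition ddiff :: "nat \<Rightarrow> ('v \<Rightarrow> 'v::ab_group_add) \<Rightarrow> ('v \<Rightarrow> 'v) \<Rightarrow> 'v \<Rightarrow> 'v" where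
  "ddiff n A B = (\<lambda>v. \<Sum>j<n. (A ^^ j) ((B ^^ (n - 1 - j)) v))"

definition Qop :: "('k::field \<Rightarrow> 'v \<Rightarrow> 'v::ab_group_add) \<Rightarrow> 'k \<Rightarrow> 'k \<Rightarrow> 'k
      \<Rightarrow> ('v \<Rightarrow> 'v) \<Rightarrow> ('v \<Rightarrow> 'v) \<Rightarrow> 'v \<Rightarrow> 'v" where
  "Qop sc p i j U V = (if i = j then (\<lambda>v. 0)
     else (\<lambda>v. sc ((-1) ^ hh p i j) ((opminus U V ^^ nat (- cdot p i j)) v)))"

text \<open>(Q_{i,j}(U,A) - Q_{i,j}(U,B)) / (A - B).  Writing Y = U - A, Z = U - B
  (so A - B = Z - Y) this is -(-1)^{h_{i,j}} (Y^n - Z^n)/(Y - Z).\<close>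
definition Qdiv :: "('k::field \<Rightarrow> 'v \<Rightarrow> 'v::ab_group_add) \<Rightarrow> 'k \<Rightarrow> 'k \<Rightarrow> 'k
      \<Rightarrow> ('v \<Rightarrow> 'v) \<Rightarrow> ('v \<Rightarrow> 'v) \<Rightarrow> ('v \<Rightarrow> 'v) \<Rightarrow> 'v \<Rightarrow> 'v" where
  "Qdiv sc p i j U A B = (if i = j then (\<lambda>v. 0)
     else (\<lambda>v. - sc ((-1) ^ hh p i j)
                 (ddiff (nat (- cdot p i j)) (opminus U A) (opminus U B) v)))"

definition graded_vs :: "('k::field \<Rightarrow> 'v \<Rightarrow> 'v::ab_group_add) \<Rightarrow> (int \<Rightarrow> 'v set) \<Rightarrow> bool" where
  "graded_vs sc G \<longleftrightarrow> vector_space sc \<and> (\<forall>d. module.subspace sc (G d)) \<and>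
     (\<forall>v. \<exists>!c. finite {d. c d \<noteq> 0} \<and> (\<forall>d. c d \<in> G d) \<and> v = (\<Sum>d\<in>{d. c d \<noteq> 0}. c d))"

definition homog :: "(int \<Rightarrow> 'v set) \<Rightarrow> int \<Rightarrow> ('v \<Rightarrow> 'v) \<Rightarrow> bool" where
  "homog G a f \<longleftrightarrow> (\<forall>d. f ` G d \<subseteq> G (d + a))"

definition fin_dim :: "('k::field \<Rightarrow> 'v \<Rightarrow> 'v::ab_group_add) \<Rightarrow> bool" where
  "fin_dim sc \<longleftrightarrow> (\<exists>B. finite B \<and> module.span sc B = UNIV)"

text \<open>Graded dimension of a graded subspace N, as its coefficient function:
  gdim N = sum_d v^d dim (N \<inter> G d).\<close>
definition gdim :: "('k::field \<Rightarrow> 'v \<Rightarrow> 'v::ab_group_add) \<Rightarrow> (int \<Rightarrow> 'v set) \<Rightarrow> 'v set \<Rightarrow> int \<Rightarrow> nat" where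
  "gdim sc G N = (\<lambda>d. vector_space.dim sc (N \<inter> G d))"

text \<open>Laurent polynomials (given by coefficient functions) in Z[v^2,v^-2] and in v Z[v^2,v^-2].\<close>
definition in_Zv2 :: "(int \<Rightarrow> nat) \<Rightarrow> bool" where
  "in_Zv2 f \<longleftrightarrow> finite {d. f d \<noteq> 0} \<and> (\<forall>d. odd d \<longrightarrow> f d = 0)"

definition in_vZv2 :: "(int \<Rightarrow> nat) \<Rightarrow> bool" where
  "in_vZv2 f \<longleftrightarrow> finite {d. f d \<noteq> 0} \<and> (\<forall>d. even d \<longrightarrow> f d = 0)"

text \<open>A graded theta-R_m-module structure on the graded vector space (sc, G):
  e i = action of 1_i, x l = action of kappa_l (1 \<le> l \<le> m), s k = action of
  sigma_k (1 \<le> k \<le> m-1), pi1 = action of pi_1 (only for m \<ge> 1).  For m = 0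
  the algebra is k, generated by the single idempotent 1_{()} = 1.\<close>
definition thetaR_module ::
  "'k::field \<Rightarrow> 'k \<Rightarrow> 'k set \<Rightarrow> nat \<Rightarrow> ('k \<Rightarrow> 'v \<Rightarrow> 'v::ab_group_add) \<Rightarrow> (int \<Rightarrow> 'v set)
   \<Rightarrow> ('k list \<Rightarrow> 'v \<Rightarrow> 'v) \<Rightarrow> (nat \<Rightarrow> 'v \<Rightarrow> 'v) \<Rightarrow> (nat \<Rightarrow> 'v \<Rightarrow> 'v) \<Rightarrow> ('v \<Rightarrow> 'v) \<Rightarrow> bool" where
  "thetaR_module p q I m sc G e x s pi1 \<longleftrightarrow>
    graded_vs sc G \<and>
    \<comment> \<open>linearity\<close>
    (\<forall>i\<in>seqs I m. Vector_Spaces.linear sc sc (e i)) \<and>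
    (\<forall>l. 1 \<le> l \<and> l \<le> m \<longrightarrow> Vector_Spaces.linear sc sc (x l)) \<and>
    (\<forall>k. 1 \<le> k \<and> k < m \<longrightarrow> Vector_Spaces.linear sc sc (s k)) \<and>
    (1 \<le> m \<longrightarrow> Vector_Spaces.linear sc sc pi1) \<and>
    \<comment> \<open>grading\<close>
    (\<forall>i\<in>seqs I m. homog G 0 (e i)) \<and>
    (\<forall>l. 1 \<le> l \<and> l \<le> m \<longrightarrow> homog G 2 (x l)) \<and>
    (\<forall>k i. 1 \<le> k \<and> k < m \<and> i \<in> seqs I m \<longrightarrow>
        homog G (- cdot p (ix i k) (ix i (k + 1))) (s k \<circ> e i)) \<and>
    (\<forall>i\<in>seqs I m. 1 \<le> m \<longrightarrow> homog G (int (lam q (ix i 0) + lam q (ix i 1))) (pi1 \<circ> e i)) \<and>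
    \<comment> \<open>idempotents: orthogonal, and 1 = sum of the 1_i\<close>
    (\<forall>i\<in>seqs I m. \<forall>j\<in>seqs I m. e i \<circ> e j = (if i = j then e i else (\<lambda>v. 0))) \<and>
    finite {i\<in>seqs I m. e i \<noteq> (\<lambda>v. 0)} \<and>
    (\<forall>v. v = (\<Sum>i\<in>{i\<in>seqs I m. e i \<noteq> (\<lambda>v. 0)}. e i v)) \<and>
    \<comment> \<open>commutation with idempotents\<close>
    (\<forall>k i. 1 \<le> k \<and> k < m \<and> i \<in> seqs I m \<longrightarrow> s k \<circ> e i = e (sk_seq k i) \<circ> s k) \<and>
    (\<forall>l i. 1 \<le> l \<and> l \<le> m \<and> i \<in> seqs I m \<longrightarrow> x l \<circ> e i = e i \<circ> x l) \<and>
    (\<forall>i\<in>seqs I m. 1 \<le> m \<longrightarrow> pi1 \<circ> e i = e (eps1_seq i) \<circ> pi1) \<and>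
    \<comment> \<open>the kappa's commute; pi_1 kappa_l = kappa_{eps_1(l)} pi_1\<close>
    (\<forall>l l'. 1 \<le> l \<and> l \<le> m \<and> 1 \<le> l' \<and> l' \<le> m \<longrightarrow> x l \<circ> x l' = x l' \<circ> x l) \<and>
    (\<forall>l. 1 \<le> l \<and> l \<le> m \<longrightarrow> pi1 \<circ> x l = Xop x (eps1_pos (int l)) \<circ> pi1) \<and>
    \<comment> \<open>quadratic relations\<close>
    (\<forall>k i. 1 \<le> k \<and> k < m \<and> i \<in> seqs I m \<longrightarrow>
        s k \<circ> s k \<circ> e i = Qop sc p (ix i k) (ix i (k + 1)) (x (k + 1)) (x k) \<circ> e i) \<and>
    (\<forall>i\<in>seqs I m. 1 \<le> m \<longrightarrow>
        pi1 \<circ> pi1 \<circ> e i = (Xop x 0 ^^ lam q (ix i 0)) \<circ> (Xop x 1 ^^ lam q (ix i 1)) \<circ> e i) \<and>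
    \<comment> \<open>commutations of far generators\<close>
    (\<forall>k k'. 1 \<le> k \<and> k < m \<and> 1 \<le> k' \<and> k' < m \<and> \<bar>int k - int k'\<bar> \<noteq> 1 \<longrightarrow>
        s k \<circ> s k' = s k' \<circ> s k) \<and>
    (\<forall>k. 1 < k \<and> k < m \<longrightarrow> pi1 \<circ> s k = s k \<circ> pi1) \<and>
    \<comment> \<open>type B braid relation\<close>
    (\<forall>i\<in>seqs I m. 2 \<le> m \<longrightarrow>
        (\<forall>v. (s 1 \<circ> pi1 \<circ> s 1 \<circ> pi1 \<circ> e i) v =
             (pi1 \<circ> s 1 \<circ> pi1 \<circ> s 1 \<circ> e i) v +
             (if ix i 0 = ix i 2
              then sc ((-1) ^ lam q (ix i 2))
                     (ddiff (lam q (ix i 1) + lam q (ix i 2)) (Xop x 0) (Xop x 2) (s 1 (e i v)))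
              else 0))) \<and>
    \<comment> \<open>type A braid relation\<close>
    (\<forall>k i. 1 \<le> k \<and> k + 2 \<le> m \<and> i \<in> seqs I m \<longrightarrow>
        (\<forall>v. (s (k + 1) \<circ> s k \<circ> s (k + 1) \<circ> e i) v - (s k \<circ> s (k + 1) \<circ> s k \<circ> e i) v =
             (if ix i k = ix i (k + 2)
              then Qdiv sc p (ix i k) (ix i (k + 1)) (x (k + 1)) (x k) (x (k + 2)) (e i v)
              else 0))) \<and>
    \<comment> \<open>sigma_k kappa_l - kappa_{s_k(l)} sigma_k\<close>
    (\<forall>k l i. 1 \<le> k \<and> k < m \<and> 1 \<le> l \<and> l \<le> m \<and> i \<in> seqs I m \<longrightarrow>
        (\<forall>v. (s k \<circ> x l \<circ> e i) v - (x (sk_pos k l) \<circ> s k \<circ> e i) v =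
             (if l = k \<and> ix i k = ix i (k + 1) then - e i v
              else if l = k + 1 \<and> ix i k = ix i (k + 1) then e i v
              else 0)))"

definition graded_submodule ::
  "'k::field set \<Rightarrow> nat \<Rightarrow> ('k \<Rightarrow> 'v \<Rightarrow> 'v::ab_group_add) \<Rightarrow> (int \<Rightarrow> 'v set)
   \<Rightarrow> ('k list \<Rightarrow> 'v \<Rightarrow> 'v) \<Rightarrow> (nat \<Rightarrow> 'v \<Rightarrow> 'v) \<Rightarrow> (nat \<Rightarrow> 'v \<Rightarrow> 'v) \<Rightarrow> ('v \<Rightarrow> 'v)
   \<Rightarrow> 'v set \<Rightarrow> bool" where
  "graded_submodule I m sc G e x s pi1 N \<longleftrightarrow>
    module.subspace sc N \<and>
    (\<forall>i\<in>seqs I m. e i ` N \<subseteq> N) \<and>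
    (\<forall>l. 1 \<le> l \<and> l \<le> m \<longrightarrow> x l ` N \<subseteq> N) \<and>
    (\<forall>k. 1 \<le> k \<and> k < m \<longrightarrow> s k ` N \<subseteq> N) \<and>
    (1 \<le> m \<longrightarrow> pi1 ` N \<subseteq> N) \<and>
    (\<forall>v\<in>N. \<forall>c. finite {d. c d \<noteq> 0} \<and> (\<forall>d. c d \<in> G d) \<and> v = (\<Sum>d\<in>{d. c d \<noteq> 0}. c d)
        \<longrightarrow> (\<forall>d. c d \<in> N))"

definition irreducible_graded ::
  "'k::field set \<Rightarrow> nat \<Rightarrow> ('k \<Rightarrow> 'v \<Rightarrow> 'v::ab_group_add) \<Rightarrow> (int \<Rightarrow> 'v set)
   \<Rightarrow> ('k list \<Rightarrow> 'v \<Rightarrow> 'v) \<Rightarrow> (nat \<Rightarrow> 'v \<Rightarrow> 'v) \<Rightarrow> (nat \<Rightarrow> 'v \<Rightarrow> 'v) \<Rightarrow> ('v \<Rightarrow> 'v) \<Rightarrow> bool" where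
  "irreducible_graded I m sc G e x s pi1 \<longleftrightarrow>
    (UNIV :: 'v set) \<noteq> {0} \<and>
    (\<forall>N. graded_submodule I m sc G e x s pi1 N \<longrightarrow> N = {0} \<or> N = UNIV)"

end

theory Submission
  imports Defs
begin


definition Dec :: "(int \<Rightarrow> 'v::ab_group_add set) \<Rightarrow> 'v \<Rightarrow> (int \<Rightarrow> 'v) \<Rightarrow> bool" where
  "Dec G v c \<longleftrightarrow> finite {d. c d \<noteq> 0} \<and> (\<forall>d. c d \<in> G d) \<and> v = (\<Sum>d\<in>{d. c d \<noteq> 0}. c d)"

definition cmp :: "(int \<Rightarrow> 'v::ab_group_add set) \<Rightarrow> 'v \<Rightarrow> int \<Rightarrow> 'v" where
  "cmp G v = (THE c. Dec G v c)"

lemma gv_vs: "graded_vs sc G \<Longrightarrow> vector_space sc"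
  by (simp add: graded_vs_def)

lemma gv_sub: "graded_vs sc G \<Longrightarrow> module.subspace sc (G d)"
  by (simp add: graded_vs_def)

lemma gv_mod: "graded_vs sc G \<Longrightarrow> module sc"
  by (simp add: graded_vs_def module_iff_vector_space)

lemma G0: "graded_vs sc G \<Longrightarrow> 0 \<in> G d"
  using gv_sub[of sc G d] module.subspace_0[OF gv_mod] by blast

lemma Gadd: "graded_vs sc G \<Longrightarrow> u \<in> G d \<Longrightarrow> w \<in> G d \<Longrightarrow> u + w \<in> G d"
  using gv_sub[of sc G d] module.subspace_add[OF gv_mod] by blast

lemma Gscale: "graded_vs sc G \<Longrightarrow> u \<in> G d \<Longrightarrow> sc r u \<in> G d"
  using gv_sub[of sc G d] module.subspace_scale[OF gv_mod] by blast

lemma ex1_Dec: assumes "graded_vs sc G" shows "\<exists>!c. Dec G v c"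
proof -
  have "\<forall>v. \<exists>!c. Dec G v c" using assms unfolding graded_vs_def Dec_def by (elim conjE)
  thus ?thesis ..
qed

lemma cmp_Dec: "graded_vs sc G \<Longrightarrow> Dec G v (cmp G v)"
  unfolding cmp_def by (rule theI'[OF ex1_Dec])

lemma cmp_uniq: "graded_vs sc G \<Longrightarrow> Dec G v c \<Longrightarrow> cmp G v = c"
  unfolding cmp_def by (rule the1_equality[OF ex1_Dec])

lemma sum_supp: "finite S \<Longrightarrow> {d. c d \<noteq> 0} \<subseteq> S \<Longrightarrow> sum c {d. c d \<noteq> 0} = sum c S"
  by (rule sum.mono_neutral_left) auto

lemma Dec_alt: "finite S \<Longrightarrow> {d. c d \<noteq> 0} \<subseteq> S \<Longrightarrow> (\<forall>d. c d \<in> G d) \<Longrightarrow> v = sum c S \<Longrightarrow> Dec G v c"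
  unfolding Dec_def using sum_supp[of S c] finite_subset by metis

lemma cmp_props: assumes "graded_vs sc G"
  shows "finite {d. cmp G v d \<noteq> 0} \<and> (\<forall>d. cmp G v d \<in> G d) \<and> v = (\<Sum>d\<in>{d. cmp G v d \<noteq> 0}. cmp G v d)"
  using cmp_Dec[OF assms, of v] unfolding Dec_def .

lemma cmp_fin: assumes "graded_vs sc G" shows "finite {d. cmp G v d \<noteq> 0}"
  using cmp_props[OF assms, of v] by (rule conjunct1)

lemma cmp_in: assumes "graded_vs sc G" shows "cmp G v d \<in> G d"
proof -
  have "\<forall>d. cmp G v d \<in> G d" using cmp_props[OF assms, of v] by (elim conjE)
  thus ?thesis ..
qed

lemma cmp_sum: assumes "graded_vs sc G" shows "v = (\<Sum>d\<in>{d. cmp G v d \<noteq> 0}. cmp G v d)"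
  using cmp_props[OF assms, of v] by (elim conjE)

lemma cmp_add: assumes gv: "graded_vs sc G"
  shows "cmp G (u + w) = (\<lambda>d. cmp G u d + cmp G w d)"
proof (rule cmp_uniq[OF gv], rule Dec_alt)
  let ?S = "{d. cmp G u d \<noteq> 0} \<union> {d. cmp G w d \<noteq> 0}"
  show "finite ?S" using cmp_fin[OF gv] by blast
  show "{d. cmp G u d + cmp G w d \<noteq> 0} \<subseteq> ?S" by auto
  show "\<forall>d. cmp G u d + cmp G w d \<in> G d" using Gadd[OF gv] cmp_in[OF gv] by blast
  have "sum (cmp G u) {d. cmp G u d \<noteq> 0} = sum (cmp G u) ?S"
    by (rule sum_supp) (simp_all add: cmp_fin[OF gv] subset_iff)
  with cmp_sum[OF gv, of u] have hu: "u = sum (cmp G u) ?S" by (rule trans)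
  have "sum (cmp G w) {d. cmp G w d \<noteq> 0} = sum (cmp G w) ?S"
    by (rule sum_supp) (simp_all add: cmp_fin[OF gv] subset_iff)
  with cmp_sum[OF gv, of w] have hw: "w = sum (cmp G w) ?S" by (rule trans)
  from hu hw have "u + w = sum (cmp G u) ?S + sum (cmp G w) ?S"
    by (rule arg_cong2[where f="(+)"])
  then show "u + w = (\<Sum>d\<in>?S. cmp G u d + cmp G w d)"
    by (simp only: sum.distrib)
qed

lemma cmp_zero: assumes gv: "graded_vs sc G" shows "cmp G 0 = (\<lambda>d. 0)"
  by (rule cmp_uniq[OF gv]) (simp add: Dec_def G0[OF gv])

lemma cmp_scale: assumes gv: "graded_vs sc G"
  shows "cmp G (sc r u) = (\<lambda>d. sc r (cmp G u d))"
proof (rule cmp_uniq[OF gv], rule Dec_alt)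
  let ?S = "{d. cmp G u d \<noteq> 0}"
  interpret module sc by (rule gv_mod[OF gv])
  show "finite ?S" using cmp_fin[OF gv] by blast
  show "{d. sc r (cmp G u d) \<noteq> 0} \<subseteq> ?S" by auto
  show "\<forall>d. sc r (cmp G u d) \<in> G d" using Gscale[OF gv] cmp_in[OF gv] by blast
  show "sc r u = (\<Sum>d\<in>?S. sc r (cmp G u d))"
    by (rule trans[OF arg_cong[where f="sc r", OF cmp_sum[OF gv]] scale_sum_right])
qed

lemma cmp_single: assumes gv: "graded_vs sc G" and "v \<in> G d0"
  shows "cmp G v = (\<lambda>d. if d = d0 then v else 0)"
  by (rule cmp_uniq[OF gv], rule Dec_alt[of "{d0}"]) (use assms G0[OF gv] in auto)

lemma cmp_sumf: assumes gv: "graded_vs sc G" and "finite A"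
  shows "cmp G (\<Sum>x\<in>A. g x) d = (\<Sum>x\<in>A. cmp G (g x) d)"
  using assms(2) by induct (simp_all add: cmp_zero[OF gv] cmp_add[OF gv])

lemma addf_sum: fixes f :: "'a::ab_group_add \<Rightarrow> 'b::ab_group_add" assumes "\<And>u w. f (u + w) = f u + f w"
  shows "f (sum g A) = (\<Sum>x\<in>A. f (g x))"
proof -
  interpret additive f by standard (rule assms)
  show ?thesis by (rule sum)
qed

lemma addf_zero: fixes f :: "'a::ab_group_add \<Rightarrow> 'b::ab_group_add" assumes "\<And>u w. f (u + w) = f u + f w" shows "f 0 = 0"
proof -
  interpret additive f by standard (rule assms)
  show ?thesis by (rule zero)
qed

lemma cmp_hom: assumes gv: "graded_vs sc G" and add: "\<And>u w. f (u + w) = f u + f w"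
  and h: "homog G a f"
  shows "cmp G (f v) d = f (cmp G v (d - a))"
proof -
  let ?S = "{d. cmp G v d \<noteq> 0}"
  have fin: "finite ?S" by (rule cmp_fin[OF gv])
  have "f v = f (\<Sum>d'\<in>?S. cmp G v d')"
    by (rule arg_cong[where f=f, OF cmp_sum[OF gv]])
  also have "\<dots> = (\<Sum>d'\<in>?S. f (cmp G v d'))"
    by (rule addf_sum[OF add])
  finally have "f v = (\<Sum>d'\<in>?S. f (cmp G v d'))" .
  hence "cmp G (f v) d = (\<Sum>d'\<in>?S. cmp G (f (cmp G v d')) d)"
    using cmp_sumf[OF gv fin, of "\<lambda>d'. f (cmp G v d')" d] by (simp only:)
  also have "\<dots> = (\<Sum>d'\<in>?S. if d' = d - a then f (cmp G v d') else 0)"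
  proof (rule sum.cong[OF refl])
    fix d' have "f (cmp G v d') \<in> G (d' + a)" using h cmp_in[OF gv] unfolding homog_def by blast
    thus "cmp G (f (cmp G v d')) d = (if d' = d - a then f (cmp G v d') else 0)"
      using cmp_single[OF gv] by auto
  qed
  also have "\<dots> = (if d - a \<in> ?S then f (cmp G v (d - a)) else 0)"
    by (rule sum.delta[OF fin])
  also have "\<dots> = f (cmp G v (d - a))"
    using addf_zero[OF add] by auto
  finally show ?thesis .
qed

lemma lin_add: "Vector_Spaces.linear sc sc f \<Longrightarrow> f (u + w) = f u + f w"
  by (metis module_hom.add module_hom_iff_linear)

lemma lin_scale: "Vector_Spaces.linear sc sc f \<Longrightarrow> f (sc r u) = sc r (f u)"
  by (metis module_hom.scale module_hom_iff_linear)

lemma lin_zero: "Vector_Spaces.linear sc sc f \<Longrightarrow> f 0 = 0"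
  by (metis module_hom.zero module_hom_iff_linear)



definition opl :: "'k::field \<Rightarrow> 'k \<Rightarrow> 'k \<Rightarrow> int" where
  "opl p a b = (if a = p^2 * b \<and> b \<noteq> p^2 * a then 1 else 0)"

definition gg :: "'k::field \<Rightarrow> 'k \<Rightarrow> 'k \<Rightarrow> int" where
  "gg p a b = opl p a b + opl p (inverse a) b"

fun XX :: "'k::field \<Rightarrow> 'k list \<Rightarrow> int" where
  "XX p [] = 0"
| "XX p (a # l) = sum_list (map (gg p a) l) + XX p l"

definition CC :: "'k::field \<Rightarrow> 'k list \<Rightarrow> int" where
  "CC q l = sum_list (map (\<lambda>a. int (lam q a)) l)"

definition ff :: "'k::field \<Rightarrow> 'k \<Rightarrow> 'k list \<Rightarrow> int" where
  "ff p q l = XX p l + CC q l"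

lemma XX_append: "XX p (xs @ ys) = XX p xs + XX p ys + sum_list (map (\<lambda>a. sum_list (map (gg p a) ys)) xs)"
  by (induct xs) (simp_all add: algebra_simps)

lemma opl_inv: assumes "a \<noteq> 0" "b \<noteq> 0"
  shows "opl p (inverse a) b = opl p (inverse b) a"
proof -
  have 1: "(inverse a = p^2 * b) = (inverse b = p^2 * a)" using assms
    by (auto simp: field_simps)
  have 2: "(b \<noteq> p^2 * inverse a) = (a \<noteq> p^2 * inverse b)" using assms
    by (auto simp: field_simps)
  show ?thesis unfolding opl_def using 1 2 by simp
qed

lemma swap_par: assumes "a \<noteq> 0" "b \<noteq> 0"
  shows "even (ff p q (xs @ b # a # ys) - ff p q (xs @ a # b # ys) + cdot p a b)"
proof -
  have X: "XX p (xs @ b # a # ys) - XX p (xs @ a # b # ys) = gg p b a - gg p a b"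
    by (simp add: XX_append algebra_simps)
  have C: "CC q (xs @ b # a # ys) = CC q (xs @ a # b # ys)"
    by (simp add: CC_def algebra_simps)
  have "even (gg p b a - gg p a b + cdot p a b)"
  proof (cases "a = b")
    case True thus ?thesis by (simp add: cdot_def)
  next
    case False
    have "even (opl p b a - opl p a b - int (hh p a b) - int (hh p b a))"
      unfolding opl_def hh_def by auto
    thus ?thesis using False opl_inv[OF assms, of p] by (simp add: gg_def cdot_def algebra_simps)
  qed
  moreover have "ff p q (xs @ b # a # ys) - ff p q (xs @ a # b # ys) + cdot p a b = gg p b a - gg p a b + cdot p a b"
    using X C unfolding ff_def by linarith
  ultimately show ?thesis by simp
qed

lemma eps_par: assumes "a \<noteq> 0"
  shows "even (ff p q (inverse a # ys) - ff p q (a # ys) + int (lam q (inverse a) + lam q a))"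
proof -
  have "gg p (inverse a) = gg p a" by (rule ext) (simp add: gg_def)
  hence X: "XX p (inverse a # ys) = XX p (a # ys)" by simp
  have "even (int (lam q (inverse a)) - int (lam q a) + int (lam q (inverse a) + lam q a))"
    by simp
  thus ?thesis using X by (simp add: ff_def CC_def algebra_simps)
qed



lemma split3: assumes "length j = m" "1 \<le> k" "k < m"
  shows "\<exists>xs a b ys. j = xs @ a # b # ys \<and> length xs = k - 1"
proof -
  have "j = take (k - 1) j @ drop (k - 1) j" by simp
  also have "drop (k - 1) j = j ! (k - 1) # drop k j"
    using assms Cons_nth_drop_Suc[of "k - 1" j] by simp
  also have "drop k j = j ! k # drop (Suc k) j"
    using assms Cons_nth_drop_Suc[of k j] by simp
  finally show ?thesis by (intro exI conjI) (use assms in auto)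
qed

lemma sk_app: "length xs = k - 1 \<Longrightarrow> 1 \<le> k \<Longrightarrow> sk_seq k (xs @ a # b # ys) = xs @ b # a # ys"
  by (cases k) (auto simp: sk_seq_def list_update_append nth_append)

lemma ix_k: "length xs = k - 1 \<Longrightarrow> 1 \<le> k \<Longrightarrow> ix (xs @ a # b # ys) (int k) = a"
  by (cases k) (auto simp: ix_def nth_append)

lemma ix_k1: "length xs = k - 1 \<Longrightarrow> 1 \<le> k \<Longrightarrow> ix (xs @ a # b # ys) (int (k + 1)) = b"
  by (cases k) (auto simp: ix_def nth_append nat_add_distrib)

lemma ix_0: "ix (a # ys) 0 = inverse a" by (simp add: ix_def)
lemma ix_1: "ix (a # ys) 1 = a" by (simp add: ix_def)

lemma eps_app: "eps1_seq (a # ys) = inverse a # ys" by (simp add: eps1_seq_def)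



lemma sk_ff: assumes j0: "j0 \<in> seqs I m" and I0: "I \<subseteq> - {0}" and k: "1 \<le> k" "k < m"
  shows "sk_seq k j0 \<in> seqs I m \<and> sk_seq k (sk_seq k j0) = j0 \<and>
    even (ff p q (sk_seq k j0) - ff p q j0 + cdot p (ix j0 (int k)) (ix j0 (int (k + 1))))"
proof -
  obtain xs a b ys where j: "j0 = xs @ a # b # ys" and l: "length xs = k - 1"
    using split3[of j0 m k] j0 k by (auto simp: seqs_def)
  have ab: "a \<noteq> 0" "b \<noteq> 0" using j j0 I0 by (auto simp: seqs_def)
  show ?thesis
    using j0 swap_par[OF ab, of p q xs ys] unfolding j
    by (simp add: sk_app[OF l k(1)] ix_k[OF l k(1)] ix_k1[OF l k(1), simplified] seqs_def)
qed

lemma eps_ff: assumes j0: "j0 \<in> seqs I m" and I0: "I \<subseteq> - {0}"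
  and Iinv: "\<forall>z\<in>I. inverse z \<in> I" and m: "1 \<le> m"
  shows "eps1_seq j0 \<in> seqs I m \<and> eps1_seq (eps1_seq j0) = j0 \<and>
    even (ff p q (eps1_seq j0) - ff p q j0 + int (lam q (ix j0 0) + lam q (ix j0 1)))"
proof -
  obtain a ys where j: "j0 = a # ys" using j0 m by (cases j0) (auto simp: seqs_def)
  have a: "a \<noteq> 0" using j j0 I0 by (auto simp: seqs_def)
  show ?thesis
    using j0 Iinv eps_par[OF a, of p q ys] unfolding j
    by (simp add: eps_app ix_0 ix_1 seqs_def)
qed



definition PP where
  "PP p q I m G e \<epsilon> = {v. \<forall>j\<in>seqs I m. \<forall>d. even (d + ff p q j) \<noteq> \<epsilon> \<longrightarrow> cmp G (e j v) d = 0}"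

lemma homc: assumes gv: "graded_vs sc G" and lin: "Vector_Spaces.linear sc sc f" and h: "homog G a f"
  shows "cmp G (f v) d = f (cmp G v (d - a))"
  by (rule cmp_hom[OF gv lin_add[OF lin] h])

lemma par_int: "even (d + (A::int)) \<noteq> \<epsilon> \<Longrightarrow> even (A - B + C) \<Longrightarrow> even (d - (- C) + B) \<noteq> \<epsilon>"
  by (cases \<epsilon>) (simp_all, presburger+)

lemma par_int2: "even (d + (A::int)) \<noteq> \<epsilon> \<Longrightarrow> even (A - B + C) \<Longrightarrow> even (d - C + B) \<noteq> \<epsilon>"
  by (cases \<epsilon>) (simp_all, presburger+)

lemma submod:
  assumes M_mod: "thetaR_module p q I m sc G e x s pi1"
    and I0: "I \<subseteq> - {0}" and Iinv: "\<forall>z\<in>I. inverse z \<in> I"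
  shows "graded_submodule I m sc G e x s pi1 (PP p q I m G e \<epsilon>)"
proof -
  note M = M_mod[unfolded thetaR_module_def]
  have gv: "graded_vs sc G" using M by (elim conjE) assumption
  have H1: "\<forall>i\<in>seqs I m. Vector_Spaces.linear sc sc (e i)" using M by (elim conjE) assumption
  have H2: "\<forall>l. 1 \<le> l \<and> l \<le> m \<longrightarrow> Vector_Spaces.linear sc sc (x l)" using M by (elim conjE) assumption
  have H3: "\<forall>k. 1 \<le> k \<and> k < m \<longrightarrow> Vector_Spaces.linear sc sc (s k)" using M by (elim conjE) assumption
  have H4: "1 \<le> m \<longrightarrow> Vector_Spaces.linear sc sc pi1" using M by (elim conjE) assumption
  have H5: "\<forall>i\<in>seqs I m. homog G 0 (e i)" using M by (elim conjE) assumption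
  have H6: "\<forall>l. 1 \<le> l \<and> l \<le> m \<longrightarrow> homog G 2 (x l)" using M by (elim conjE) assumption
  have H7: "\<forall>k i. 1 \<le> k \<and> k < m \<and> i \<in> seqs I m \<longrightarrow>
        homog G (- cdot p (ix i k) (ix i (k + 1))) (s k \<circ> e i)" using M by (elim conjE) assumption
  have H8: "\<forall>i\<in>seqs I m. 1 \<le> m \<longrightarrow> homog G (int (lam q (ix i 0) + lam q (ix i 1))) (pi1 \<circ> e i)"
    using M by (elim conjE) assumption
  have H9: "\<forall>i\<in>seqs I m. \<forall>j\<in>seqs I m. e i \<circ> e j = (if i = j then e i else (\<lambda>v. 0))"
    using M by (elim conjE) assumption
  have H10: "\<forall>k i. 1 \<le> k \<and> k < m \<and> i \<in> seqs I m \<longrightarrow> s k \<circ> e i = e (sk_seq k i) \<circ> s k"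
    using M by (elim conjE) assumption
  have H11: "\<forall>l i. 1 \<le> l \<and> l \<le> m \<and> i \<in> seqs I m \<longrightarrow> x l \<circ> e i = e i \<circ> x l"
    using M by (elim conjE) assumption
  have H12: "\<forall>i\<in>seqs I m. 1 \<le> m \<longrightarrow> pi1 \<circ> e i = e (eps1_seq i) \<circ> pi1"
    using M by (elim conjE) assumption
  have lin_e: "\<And>i. i \<in> seqs I m \<Longrightarrow> Vector_Spaces.linear sc sc (e i)" using H1 by blast
  have lin_x: "\<And>l. 1 \<le> l \<Longrightarrow> l \<le> m \<Longrightarrow> Vector_Spaces.linear sc sc (x l)" using H2 by blast
  have lin_s: "\<And>k. 1 \<le> k \<Longrightarrow> k < m \<Longrightarrow> Vector_Spaces.linear sc sc (s k)" using H3 by blast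
  have lin_pi: "1 \<le> m \<Longrightarrow> Vector_Spaces.linear sc sc pi1" using H4 by blast
  have hom_e: "\<And>i. i \<in> seqs I m \<Longrightarrow> homog G 0 (e i)" using H5 by blast
  have hom_x: "\<And>l. 1 \<le> l \<Longrightarrow> l \<le> m \<Longrightarrow> homog G 2 (x l)" using H6 by blast
  have hom_s: "\<And>k i. 1 \<le> k \<Longrightarrow> k < m \<Longrightarrow> i \<in> seqs I m \<Longrightarrow>
        homog G (- cdot p (ix i k) (ix i (k + 1))) (s k \<circ> e i)" using H7 by blast
  have hom_pi: "\<And>i. i\<in>seqs I m \<Longrightarrow> 1 \<le> m \<Longrightarrow> homog G (int (lam q (ix i 0) + lam q (ix i 1))) (pi1 \<circ> e i)"
    using H8 by blast
  have idem: "\<And>i j. i\<in>seqs I m \<Longrightarrow> j\<in>seqs I m \<Longrightarrow> e i \<circ> e j = (if i = j then e i else (\<lambda>v. 0))"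
    using H9 by blast
  have com_s: "\<And>k i. 1 \<le> k \<Longrightarrow> k < m \<Longrightarrow> i \<in> seqs I m \<Longrightarrow> s k \<circ> e i = e (sk_seq k i) \<circ> s k"
    using H10 by blast
  have com_x: "\<And>l i. 1 \<le> l \<Longrightarrow> l \<le> m \<Longrightarrow> i \<in> seqs I m \<Longrightarrow> x l \<circ> e i = e i \<circ> x l"
    using H11 by blast
  have com_pi: "\<And>i. i\<in>seqs I m \<Longrightarrow> 1 \<le> m \<Longrightarrow> pi1 \<circ> e i = e (eps1_seq i) \<circ> pi1"
    using H12 by blast
  have idem1: "\<And>i v. i\<in>seqs I m \<Longrightarrow> e i (e i v) = e i v"
    using idem by (metis comp_apply)
  let ?P = "PP p q I m G e \<epsilon>"
  have memP: "v \<in> ?P \<Longrightarrow> j \<in> seqs I m \<Longrightarrow> even (d + ff p q j) \<noteq> \<epsilon> \<Longrightarrow> cmp G (e j v) d = 0" for v j d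
    unfolding PP_def by blast
  interpret vs: vector_space sc by (rule gv_vs[OF gv])
  show ?thesis unfolding graded_submodule_def
  proof (intro conjI allI impI ballI)
    show "module.subspace sc ?P"
      unfolding vs.subspace_def
    proof (intro conjI ballI allI)
      show "0 \<in> ?P" unfolding PP_def
        by (auto simp: lin_zero[OF lin_e] cmp_zero[OF gv])
      fix u w assume u: "u \<in> ?P" and w: "w \<in> ?P"
      show "u + w \<in> ?P" unfolding PP_def
        using memP[OF u] memP[OF w] by (auto simp: lin_add[OF lin_e] cmp_add[OF gv])
    next
      fix c u assume u: "u \<in> ?P"
      show "sc c u \<in> ?P" unfolding PP_def
        using memP[OF u] by (auto simp: lin_scale[OF lin_e] cmp_scale[OF gv])
    qed
  next
    fix i assume i: "i \<in> seqs I m"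
    show "e i ` ?P \<subseteq> ?P"
    proof (clarify)
      fix v assume v: "v \<in> ?P"
      show "e i v \<in> ?P" unfolding PP_def
      proof (intro CollectI ballI allI impI)
        fix j d assume j: "j \<in> seqs I m" and par: "even (d + ff p q j) \<noteq> \<epsilon>"
        have "e j (e i v) = (if j = i then e i v else 0)"
          using idem[OF j i] by (metis comp_apply)
        thus "cmp G (e j (e i v)) d = 0"
          using memP[OF v j par] by (auto simp: cmp_zero[OF gv])
      qed
    qed
  next
    fix l assume l: "1 \<le> l \<and> l \<le> m"
    show "x l ` ?P \<subseteq> ?P"
    proof (clarify)
      fix v assume v: "v \<in> ?P"
      show "x l v \<in> ?P" unfolding PP_def
      proof (intro CollectI ballI allI impI)
        fix j d assume j: "j \<in> seqs I m" and par: "even (d + ff p q j) \<noteq> \<epsilon>"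
        have "e j (x l v) = x l (e j v)"
          using com_x[of l j] l j by (metis comp_apply)
        hence "cmp G (e j (x l v)) d = x l (cmp G (e j v) (d - 2))"
          using homc[OF gv lin_x hom_x] l by simp
        moreover have "even (d - 2 + ff p q j) \<noteq> \<epsilon>" using par by simp
        ultimately show "cmp G (e j (x l v)) d = 0"
          using memP[OF v j] lin_zero[OF lin_x] l by simp
      qed
    qed
  next
    fix k assume k: "1 \<le> k \<and> k < m"
    show "s k ` ?P \<subseteq> ?P"
    proof (clarify)
      fix v assume v: "v \<in> ?P"
      show "s k v \<in> ?P" unfolding PP_def
      proof (intro CollectI ballI allI impI)
        fix j d assume j: "j \<in> seqs I m" and par: "even (d + ff p q j) \<noteq> \<epsilon>"
        define j0 where "j0 = sk_seq k j"
        have F: "j0 \<in> seqs I m \<and> sk_seq k j0 = j \<and>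
          even (ff p q (sk_seq k j) - ff p q j + cdot p (ix j (int k)) (ix j (int (k + 1))))"
          using sk_ff[OF j I0, of k p q] k unfolding j0_def by auto
        have j0: "j0 \<in> seqs I m" using F by blast
        have F2: "even (ff p q j - ff p q j0 + cdot p (ix j0 k) (ix j0 (k + 1)))"
          using sk_ff[OF j0 I0, of k p q] k F by auto
        have "e j (s k v) = s k (e j0 v)"
          using com_s[of k j0] k j0 F by (metis comp_apply)
        also have "\<dots> = (s k \<circ> e j0) (e j0 v)" using idem1[OF j0] by simp
        finally have "cmp G (e j (s k v)) d = (s k \<circ> e j0) (cmp G (e j0 v) (d - (- cdot p (ix j0 k) (ix j0 (k + 1)))))"
          using homc[OF gv Vector_Spaces.linear_compose[OF lin_e[OF j0] lin_s] hom_s[OF _ _ j0]] k by simp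
        moreover have "even (d - (- cdot p (ix j0 k) (ix j0 (k + 1))) + ff p q j0) \<noteq> \<epsilon>"
          by (rule par_int[OF par F2])
        ultimately show "cmp G (e j (s k v)) d = 0"
          using memP[OF v j0] lin_zero[OF Vector_Spaces.linear_compose[OF lin_e[OF j0] lin_s]] k by simp
      qed
    qed
  next
    assume m: "1 \<le> m"
    show "pi1 ` ?P \<subseteq> ?P"
    proof (clarify)
      fix v assume v: "v \<in> ?P"
      show "pi1 v \<in> ?P" unfolding PP_def
      proof (intro CollectI ballI allI impI)
        fix j d assume j: "j \<in> seqs I m" and par: "even (d + ff p q j) \<noteq> \<epsilon>"
        define j0 where "j0 = eps1_seq j"
        have F: "j0 \<in> seqs I m \<and> eps1_seq j0 = j"
          using eps_ff[OF j I0 Iinv m, of p q] unfolding j0_def by auto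
        have j0: "j0 \<in> seqs I m" using F by blast
        have F2: "even (ff p q j - ff p q j0 + int (lam q (ix j0 0) + lam q (ix j0 1)))"
          using eps_ff[OF j0 I0 Iinv m, of p q] F by auto
        have "e j (pi1 v) = pi1 (e j0 v)"
          using com_pi[OF j0 m] F by (metis comp_apply)
        also have "\<dots> = (pi1 \<circ> e j0) (e j0 v)" using idem1[OF j0] by simp
        finally have "cmp G (e j (pi1 v)) d = (pi1 \<circ> e j0) (cmp G (e j0 v) (d - int (lam q (ix j0 0) + lam q (ix j0 1))))"
          using homc[OF gv Vector_Spaces.linear_compose[OF lin_e[OF j0] lin_pi[OF m]] hom_pi[OF j0 m]] by simp
        moreover have "even (d - int (lam q (ix j0 0) + lam q (ix j0 1)) + ff p q j0) \<noteq> \<epsilon>"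
          by (rule par_int2[OF par F2])
        ultimately show "cmp G (e j (pi1 v)) d = 0"
          using memP[OF v j0] lin_zero[OF Vector_Spaces.linear_compose[OF lin_e[OF j0] lin_pi[OF m]]] by simp
      qed
    qed
  next
    fix v c d assume v: "v \<in> ?P"
      and dec: "finite {d. c d \<noteq> 0} \<and> (\<forall>d. c d \<in> G d) \<and> v = (\<Sum>d\<in>{d. c d \<noteq> 0}. c d)"
    have "Dec G v c" using dec unfolding Dec_def .
    hence "cmp G v = c" by (rule cmp_uniq[OF gv])
    hence c: "c d = cmp G v d" by simp
    show "c d \<in> ?P" unfolding c PP_def
    proof (intro CollectI ballI allI impI)
      fix j d' assume j: "j \<in> seqs I m" and par: "even (d' + ff p q j) \<noteq> \<epsilon>"
      have "cmp G (e j (cmp G v d)) d' = e j (cmp G (cmp G v d) d')"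
        using homc[OF gv lin_e[OF j] hom_e[OF j]] by simp
      also have "\<dots> = (if d' = d then e j (cmp G v d) else 0)"
        using cmp_single[OF gv cmp_in[OF gv]] lin_zero[OF lin_e[OF j]] by simp
      also have "\<dots> = (if d' = d then cmp G (e j v) d' else 0)"
        using homc[OF gv lin_e[OF j] hom_e[OF j]] by simp
      also have "\<dots> = 0" using memP[OF v j par] by auto
      finally show "cmp G (e j (cmp G v d)) d' = 0" .
    qed
  qed
qed



lemma fin_supp: assumes gv: "graded_vs sc G" and fd: "fin_dim sc"
  shows "finite {d. \<exists>w\<in>G d. w \<noteq> 0}"
proof -
  interpret vs: vector_space sc by (rule gv_vs[OF gv])
  obtain B where B: "finite B" "vs.span B = UNIV" using fd unfolding fin_dim_def by blast
  have "{d. \<exists>w\<in>G d. w \<noteq> 0} \<subseteq> (\<Union>b\<in>B. {d. cmp G b d \<noteq> 0})"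
  proof (rule subsetI)
    fix d assume "d \<in> {d. \<exists>w\<in>G d. w \<noteq> 0}"
    then obtain w where w: "w \<in> G d" "w \<noteq> 0" by blast
    have "w \<in> vs.span B" using B by simp
    then obtain u where wu: "w = (\<Sum>b\<in>B. sc (u b) b)" using vs.span_finite[OF B(1)] by auto
    have "cmp G w d = (\<Sum>b\<in>B. cmp G (sc (u b) b) d)"
      unfolding wu by (rule cmp_sumf[OF gv B(1)])
    also have "\<dots> = (\<Sum>b\<in>B. sc (u b) (cmp G b d))" by (simp add: cmp_scale[OF gv])
    finally have "(\<Sum>b\<in>B. sc (u b) (cmp G b d)) \<noteq> 0"
      using cmp_single[OF gv w(1)] w(2) by simp
    then obtain b where "b \<in> B" "sc (u b) (cmp G b d) \<noteq> 0"
      by (meson sum.neutral)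
    thus "d \<in> (\<Union>b\<in>B. {d. cmp G b d \<noteq> 0})" by auto
  qed
  moreover have "finite (\<Union>b\<in>B. {d. cmp G b d \<noteq> 0})"
    using B(1) cmp_fin[OF gv] by blast
  ultimately show ?thesis by (rule finite_subset)
qed

lemma dim0: assumes gv: "graded_vs sc G" and "S \<subseteq> {0}"
  shows "vector_space.dim sc S = 0"
proof -
  interpret vs: vector_space sc by (rule gv_vs[OF gv])
  show ?thesis
    by (rule vs.dim_unique[of "{}"]) (use assms(2) vs.span_empty vs.independent_empty in auto)
qed



theorem lemma8p28:
  fixes p q :: "'k::field_char_0"
    and I :: "'k set"
    and m :: nat
    and sc :: "'k \<Rightarrow> 'v::ab_group_add \<Rightarrow> 'v"
    and G :: "int \<Rightarrow> 'v set"
    and e :: "'k list \<Rightarrow> 'v \<Rightarrow> 'v"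
    and x s :: "nat \<Rightarrow> 'v \<Rightarrow> 'v"
    and pi1 :: "'v \<Rightarrow> 'v"
  assumes alg_closed: "\<forall>P :: 'k poly. degree P > 0 \<longrightarrow> (\<exists>z. poly P z = 0)"
    and p_ne: "p \<noteq> 0" "p \<noteq> 1" "p \<noteq> -1"
    and q_ne: "q \<noteq> 0"
    and I_sub: "I \<subseteq> - {0}" "1 \<notin> I" "-1 \<notin> I"
    and I_stable: "\<forall>z\<in>I. p^2 * z \<in> I \<and> inverse (p^2) * z \<in> I \<and> inverse z \<in> I"
    and M_mod: "thetaR_module p q I m sc G e x s pi1"
    and M_fd: "fin_dim sc"
    and M_irr: "irreducible_graded I m sc G e x s pi1"
    and i_seq: "i \<in> seqs I m"
  shows "in_vZv2 (gdim sc G (range (e i))) \<or> in_Zv2 (gdim sc G (range (e i)))"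
proof -
  note M = M_mod[unfolded thetaR_module_def]
  have gv: "graded_vs sc G" using M by (elim conjE) assumption
  have H1: "\<forall>i\<in>seqs I m. Vector_Spaces.linear sc sc (e i)" using M by (elim conjE) assumption
  have H5: "\<forall>i\<in>seqs I m. homog G 0 (e i)" using M by (elim conjE) assumption
  have H9: "\<forall>i\<in>seqs I m. \<forall>j\<in>seqs I m. e i \<circ> e j = (if i = j then e i else (\<lambda>v. 0))"
    using M by (elim conjE) assumption
  have Hs: "\<forall>v. v = (\<Sum>i\<in>{i\<in>seqs I m. e i \<noteq> (\<lambda>v. 0)}. e i v)"
    using M by (elim conjE) assumption
  have lin_e: "\<And>i. i \<in> seqs I m \<Longrightarrow> Vector_Spaces.linear sc sc (e i)" using H1 by blast
  have hom_e: "\<And>i. i \<in> seqs I m \<Longrightarrow> homog G 0 (e i)" using H5 by blast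
  have eji: "\<And>i j v. i\<in>seqs I m \<Longrightarrow> j\<in>seqs I m \<Longrightarrow> e i (e j v) = (if i = j then e i v else 0)"
    using H9 by (metis comp_apply)
  have cmpe: "\<And>j v d. j \<in> seqs I m \<Longrightarrow> cmp G (e j v) d = e j (cmp G v d)"
    using homc[OF gv lin_e hom_e] by simp
  have Iinv: "\<forall>z\<in>I. inverse z \<in> I" using I_stable by blast
  have irr: "UNIV \<noteq> {0::'v}" "\<And>N. graded_submodule I m sc G e x s pi1 N \<Longrightarrow> N = {0} \<or> N = UNIV"
    using M_irr unfolding irreducible_graded_def by blast+
  obtain v0 :: 'v where v0: "v0 \<noteq> 0" using irr(1) by blast
  obtain j where j: "j \<in> seqs I m" "e j v0 \<noteq> 0"
  proof (rule ccontr)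
    assume "\<not> thesis"
    hence "\<forall>j\<in>seqs I m. e j v0 = 0" using that by blast
    hence "v0 = 0" using Hs[rule_format, of v0] by simp
    with v0 show False by simp
  qed
  obtain d where d: "cmp G (e j v0) d \<noteq> 0"
  proof (rule ccontr)
    assume "\<not> thesis"
    hence "{d. cmp G (e j v0) d \<noteq> 0} = {}" using that by blast
    hence "e j v0 = 0" using cmp_sum[OF gv, of "e j v0"] by simp
    with j show False by simp
  qed
  define w where "w = cmp G (e j v0) d"
  define \<epsilon> where "\<epsilon> = even (d + ff p q j)"
  have wG: "w \<in> G d" unfolding w_def by (rule cmp_in[OF gv])
  have ejw: "e j w = w" unfolding w_def
    using cmpe[OF j(1), of "e j v0" d] eji[OF j(1) j(1)] by simp
  have "w \<in> PP p q I m G e \<epsilon>" unfolding PP_def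
  proof (intro CollectI ballI allI impI)
    fix j' d' assume j': "j' \<in> seqs I m" and par: "even (d' + ff p q j') \<noteq> \<epsilon>"
    have "cmp G (e j' w) d' = e j' (if d' = d then w else 0)"
      using cmpe[OF j'] cmp_single[OF gv wG] by simp
    also have "\<dots> = 0"
    proof (cases "d' = d")
      case True
      have "j' \<noteq> j" using par True \<epsilon>_def by auto
      hence "e j' w = 0" using eji[OF j' j(1), of w] ejw by simp
      thus ?thesis using True by simp
    qed (simp add: lin_zero[OF lin_e[OF j']])
    finally show "cmp G (e j' w) d' = 0" .
  qed
  moreover have "w \<noteq> 0" using d w_def by simp
  ultimately have "PP p q I m G e \<epsilon> \<noteq> {0}" by blast
  hence PU: "PP p q I m G e \<epsilon> = UNIV"
    using irr(2)[OF submod[OF M_mod I_sub(1) Iinv]] by blast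
  have zero: "range (e i) \<inter> G d' \<subseteq> {0}" if par: "even (d' + ff p q i) \<noteq> \<epsilon>" for d'
  proof
    fix w' assume "w' \<in> range (e i) \<inter> G d'"
    then obtain u where u: "w' = e i u" "w' \<in> G d'" by blast
    have "cmp G (e i w') d' = e i (cmp G w' d')" by (rule cmpe[OF i_seq])
    also have "\<dots> = e i w'" using cmp_single[OF gv u(2)] by simp
    also have "\<dots> = w'" using u(1) eji[OF i_seq i_seq] by simp
    finally have "w' = cmp G (e i w') d'" by simp
    also have "\<dots> = 0" using PU i_seq par unfolding PP_def by blast
    finally show "w' \<in> {0}" by simp
  qed
  have dz: "gdim sc G (range (e i)) d' = 0" if "even (d' + ff p q i) \<noteq> \<epsilon>" for d'
    unfolding gdim_def using dim0[OF gv zero[OF that]] .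
  have fin: "finite {d. gdim sc G (range (e i)) d \<noteq> 0}"
  proof (rule finite_subset[OF _ fin_supp[OF gv M_fd]])
    show "{d. gdim sc G (range (e i)) d \<noteq> 0} \<subseteq> {d. \<exists>w\<in>G d. w \<noteq> 0}"
    proof (rule subsetI)
      fix d' assume "d' \<in> {d. gdim sc G (range (e i)) d \<noteq> 0}"
      hence nz: "gdim sc G (range (e i)) d' \<noteq> 0" by simp
      show "d' \<in> {d. \<exists>w\<in>G d. w \<noteq> 0}"
      proof (rule ccontr)
        assume "d' \<notin> {d. \<exists>w\<in>G d. w \<noteq> 0}"
        hence "range (e i) \<inter> G d' \<subseteq> {0}" by blast
        hence "gdim sc G (range (e i)) d' = 0" unfolding gdim_def by (rule dim0[OF gv])
        with nz show False by simp
      qed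
    qed
  qed
  show ?thesis
  proof (cases "\<epsilon> = even (ff p q i)")
    case True
    have "in_Zv2 (gdim sc G (range (e i)))" unfolding in_Zv2_def
      using fin dz True by auto
    thus ?thesis ..
  next
    case False
    have "in_vZv2 (gdim sc G (range (e i)))" unfolding in_vZv2_def
      using fin dz False by auto
    thus ?thesis ..
  qed
qed


end
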